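(* Let $a,b,c,p\in\mathbb{C}$ with $-c\notin\mathbb{N}\cup\{0\}$. Define $(u_n)$ and $(v_n)$ by $u_0=1$, $u_1=\frac{ab}{c}+ip$, $u_2=\frac{iabp}{c}+\frac{a(a+1)b(b+1)}{2c(c+1)}-\frac{p^2}{2}$, $v_0=1$, $v_1=\frac{ab}{c}-ip$, $v_2=-\frac{iabp}{c}+\frac{a(a+1)b(b+1)}{2c(c+1)}-\frac{p^2}{2}$, and for all integers $n\ge2$, \[ u_{n+1}=\frac{(a+n)(b+n)+ip(c+2n)}{(n+1)(c+n)}u_n+\frac{p\left(p-i(a+b+2n-1)\right)}{(n+1)(c+n)}u_{n-1}-\frac{p^2}{(n+1)(c+n)}u_{n-2}, \] \[ v_{n+1}=\frac{(a+n)(b+n)-ip(c+2n)}{(n+1)(c+n)}v_n+\frac{p\left(p+i(a+b+2n-1)\right)}{(n+1)(c+n)}v_{n-1}-\frac{p^2}{(n+1)(c+n)}v_{n-2}. \] Then \[ \cos(pz)F(a,b;c;z)=\sum_{n=0}^\infty\frac{u_n+v_n}{2}z^n,\qquad |z|<1. \]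
   Context: Here $i$ is the imaginary unit. For $a\in\mathbb{C}$, $(a)_n=a(a+1)\cdots(a+n-1)$ denotes the Pochhammer symbol, with $(a)_0=1$. For $a,b,c\in\mathbb{C}$ with $-c\notin\mathbb{N}\cup\{0\}$, the Gaussian hypergeometric function is $F(a,b;c;z)=\sum_{n=0}^\infty \frac{(a)_n(b)_n}{(c)_n\,n!}z^n$, $|z|<1$. *)

theory Defs
  imports "HOL-Analysis.Analysis"
begin

definition hypF :: "complex \<Rightarrow> complex \<Rightarrow> complex \<Rightarrow> complex \<Rightarrow> complex" where
  "hypF a b c z = (\<Sum>n. pochhammer a n * pochhammer b n / (pochhammer c n * fact n) * z ^ n)"

fun useq :: "complex \<Rightarrow> complex \<Rightarrow> complex \<Rightarrow> complex \<Rightarrow> nat \<Rightarrow> complex" where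
  "useq a b c p 0 = 1"
| "useq a b c p (Suc 0) = a * b / c + \<i> * p"
| "useq a b c p (Suc (Suc 0)) = \<i> * a * b * p / c
     + a * (a + 1) * b * (b + 1) / (2 * c * (c + 1)) - p ^ 2 / 2"
| "useq a b c p (Suc (Suc (Suc n))) =
     (let m = of_nat (n + 2) :: complex in
       ((a + m) * (b + m) + \<i> * p * (c + 2 * m)) / ((m + 1) * (c + m)) * useq a b c p (Suc (Suc n))
     + p * (p - \<i> * (a + b + 2 * m - 1)) / ((m + 1) * (c + m)) * useq a b c p (Suc n)
     - p ^ 2 / ((m + 1) * (c + m)) * useq a b c p n)"

fun vseq :: "complex \<Rightarrow> complex \<Rightarrow> complex \<Rightarrow> complex \<Rightarrow> nat \<Rightarrow> complex" where
  "vseq a b c p 0 = 1"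
| "vseq a b c p (Suc 0) = a * b / c - \<i> * p"
| "vseq a b c p (Suc (Suc 0)) = - \<i> * a * b * p / c
     + a * (a + 1) * b * (b + 1) / (2 * c * (c + 1)) - p ^ 2 / 2"
| "vseq a b c p (Suc (Suc (Suc n))) =
     (let m = of_nat (n + 2) :: complex in
       ((a + m) * (b + m) - \<i> * p * (c + 2 * m)) / ((m + 1) * (c + m)) * vseq a b c p (Suc (Suc n))
     + p * (p + \<i> * (a + b + 2 * m - 1)) / ((m + 1) * (c + m)) * vseq a b c p (Suc n)
     - p ^ 2 / ((m + 1) * (c + m)) * vseq a b c p n)"

end

theory Submission
  imports Defs "HOL-Computational_Algebra.Formal_Power_Series"
begin



definition hf :: "complex \<Rightarrow> complex \<Rightarrow> complex \<Rightarrow> nat \<Rightarrow> complex" where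
  "hf a b c k = pochhammer a k * pochhammer b k / (pochhammer c k * fact k)"

lemma hf_rec:
  assumes "\<forall>n::nat. c \<noteq> - of_nat n"
  shows "(of_nat k + 1) * (of_nat k + c) * hf a b c (Suc k) = (a + of_nat k) * (b + of_nat k) * hf a b c k"
proof -
  have "pochhammer c k \<noteq> 0" using assms by (auto simp: pochhammer_eq_0_iff)
  moreover have "c + of_nat k \<noteq> 0" using assms[rule_format, of k] by (auto simp: add_eq_0_iff)
  moreover have "1 + of_nat k \<noteq> (0::complex)"
    by (metis of_nat_Suc of_nat_neq_0 add.commute)
  ultimately show ?thesis
    by (simp add: hf_def pochhammer_rec'  divide_simps) (simp add: algebra_simps)
qed

lemma F_ode:
  fixes a b c p :: complex
  assumes "\<forall>n::nat. c \<noteq> - of_nat n"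
  defines "F \<equiv> Abs_fps (hf a b c)"
  shows "fps_X * fps_deriv (fps_deriv F) - fps_X^2 * fps_deriv (fps_deriv F)
     + fps_const c * fps_deriv F - fps_const (a+b+1) * (fps_X * fps_deriv F) - fps_const (a*b) * F = 0"
proof (rule fps_ext)
  fix n
  have r: "(of_nat n + 1) * (of_nat n + c) * hf a b c (Suc n) = (a + of_nat n) * (b + of_nat n) * hf a b c n"
    by (rule hf_rec[OF assms(1)])
  show "fps_nth (fps_X * fps_deriv (fps_deriv F) - fps_X^2 * fps_deriv (fps_deriv F)
     + fps_const c * fps_deriv F - fps_const (a+b+1) * (fps_X * fps_deriv F) - fps_const (a*b) * F) n = fps_nth 0 n"
  proof (cases n)
    case 0 then show ?thesis using r by (simp add: fps_X_power_mult_nth F_def algebra_simps)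
  next
    case (Suc k) then show ?thesis using r
      by (cases k) (simp_all add: fps_X_power_mult_nth F_def algebra_simps)
  qed
qed

definition GG :: "complex \<Rightarrow> complex \<Rightarrow> complex \<Rightarrow> complex \<Rightarrow> complex fps" where
  "GG a b c p = fps_exp (\<i> * p) * Abs_fps (hf a b c)"

lemma G_ode:
  fixes a b c p :: complex
  assumes "\<forall>n::nat. c \<noteq> - of_nat n"
  defines "G \<equiv> GG a b c p" and "k \<equiv> fps_const (\<i> * p)"
  shows "fps_X * (fps_deriv (fps_deriv G) - (k + k) * fps_deriv G + k * k * G)
     - fps_X^2 * (fps_deriv (fps_deriv G) - (k + k) * fps_deriv G + k * k * G)
     + fps_const c * (fps_deriv G - k * G) - fps_const (a+b+1) * (fps_X * (fps_deriv G - k * G))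
     - fps_const (a*b) * G = 0"
proof -
  define F where "F = Abs_fps (hf a b c)"
  define E where "E = fps_exp (\<i> * p)"
  have G: "G = E * F" by (simp add: G_def GG_def E_def F_def)
  have dE: "fps_deriv E = k * E" by (simp add: E_def k_def)
  have dk: "fps_deriv k = 0" by (simp add: k_def)
  have e1: "E * fps_deriv F = fps_deriv G - k * G"
    unfolding G by (simp add: dE algebra_simps)
  have e2: "E * fps_deriv (fps_deriv F) = fps_deriv (fps_deriv G) - (k + k) * fps_deriv G + k * k * G"
    unfolding G by (simp add: dE dk algebra_simps)
  have "E * (fps_X * fps_deriv (fps_deriv F) - fps_X^2 * fps_deriv (fps_deriv F)
     + fps_const c * fps_deriv F - fps_const (a+b+1) * (fps_X * fps_deriv F) - fps_const (a*b) * F) = 0"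
    using F_ode[OF assms(1)] by (simp add: F_def)
  then have "fps_X * (E * fps_deriv (fps_deriv F)) - fps_X^2 * (E * fps_deriv (fps_deriv F))
     + fps_const c * (E * fps_deriv F) - fps_const (a+b+1) * (fps_X * (E * fps_deriv F)) - fps_const (a*b) * (E * F) = 0"
    by (simp add: algebra_simps)
  then show ?thesis by (simp only: e1 e2 G[symmetric])
qed

lemma G_rec:
  fixes a b c p :: complex
  assumes "\<forall>n::nat. c \<noteq> - of_nat n"
  defines "g \<equiv> fps_nth (GG a b c p)"
  shows "(of_nat (n+2) + 1) * (c + of_nat (n+2)) * g (Suc (Suc (Suc n)))
     = ((a + of_nat (n+2)) * (b + of_nat (n+2)) + \<i> * p * (c + 2 * of_nat (n+2))) * g (Suc (Suc n))
     + p * (p - \<i> * (a + b + 2 * of_nat (n+2) - 1)) * g (Suc n) - p^2 * g n"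
proof -
  have X2: "\<And>H. fps_nth (fps_X^2 * H) (Suc (Suc n)) = fps_nth H n"
    by (simp add: fps_X_power_mult_nth)
  have "fps_nth (fps_X * (fps_deriv (fps_deriv (GG a b c p)) - (fps_const (\<i> * p) + fps_const (\<i> * p)) * fps_deriv (GG a b c p) + fps_const (\<i> * p) * fps_const (\<i> * p) * GG a b c p)
     - fps_X^2 * (fps_deriv (fps_deriv (GG a b c p)) - (fps_const (\<i> * p) + fps_const (\<i> * p)) * fps_deriv (GG a b c p) + fps_const (\<i> * p) * fps_const (\<i> * p) * GG a b c p)
     + fps_const c * (fps_deriv (GG a b c p) - fps_const (\<i> * p) * GG a b c p) - fps_const (a+b+1) * (fps_X * (fps_deriv (GG a b c p) - fps_const (\<i> * p) * GG a b c p))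
     - fps_const (a*b) * GG a b c p) (Suc (Suc n)) = 0"
    by (simp only: G_ode[OF assms(1)]) simp
  then have h: "(of_nat (Suc (Suc n)) * (of_nat (Suc (Suc n)) + 1) * g (Suc (Suc (Suc n)))
     - 2 * \<i> * p * of_nat (Suc (Suc n)) * g (Suc (Suc n)) - p^2 * g (Suc n))
     - (of_nat (Suc n) * of_nat (Suc (Suc n)) * g (Suc (Suc n)) - 2 * \<i> * p * of_nat (Suc n) * g (Suc n) - p^2 * g n)
     + c * (of_nat (Suc (Suc (Suc n))) * g (Suc (Suc (Suc n))) - \<i> * p * g (Suc (Suc n)))
     - (a + b + 1) * (of_nat (Suc (Suc n)) * g (Suc (Suc n)) - \<i> * p * g (Suc n))
     - a * b * g (Suc (Suc n)) = 0"
    by (simp add: X2 g_def algebra_simps power2_eq_square)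
  show ?thesis using h by (simp add: algebra_simps power2_eq_square)
qed

lemma useq_GG:
  fixes a b c p :: complex
  assumes c: "\<forall>n::nat. c \<noteq> - of_nat n"
  shows "useq a b c p n = fps_nth (GG a b c p) n"
proof (induction n rule: less_induct)
  case (less n)
  have c0: "c \<noteq> 0" using c[rule_format, of 0] by simp
  have c1: "c + 1 \<noteq> 0" using c[rule_format, of 1] by (metis eq_neg_iff_add_eq_0 of_nat_1)
  show ?case
  proof (cases n)
    case 0
    then show ?thesis by (simp add: GG_def hf_def)
  next
    case (Suc n1)
    show ?thesis
    proof (cases n1)
      case 0
      then show ?thesis using Suc by (simp add: GG_def hf_def fps_mult_nth)
    next
      case (Suc n2)
      show ?thesis
      proof (cases n2)
        case 0
        then show ?thesis using `n = Suc n1` Suc c0 c1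
          by (simp add: GG_def hf_def fps_mult_nth eval_nat_numeral pochhammer_Suc field_simps)
      next
        case (Suc k)
        have n: "n = Suc (Suc (Suc k))" using `n = Suc n1` `n1 = Suc n2` Suc by simp
        define g where "g = fps_nth (GG a b c p)"
        have I2: "useq a b c p (Suc (Suc k)) = g (Suc (Suc k))" using less.IH n g_def by simp
        have I1: "useq a b c p (Suc k) = g (Suc k)" using less.IH n g_def by simp
        have I0: "useq a b c p k = g k" using less.IH n g_def by simp
        have D1: "of_nat (k+2) + 1 \<noteq> (0::complex)"
        proof -
          have "of_nat (k+3) \<noteq> (0::complex)" by (simp only: of_nat_eq_0_iff)
          moreover have "of_nat (k+2) + 1 = (of_nat (k+3)::complex)" by simp
          ultimately show ?thesis by (simp add: add.commute)
        qed
        have D2: "c + of_nat (k+2) \<noteq> 0" using c[rule_format, of "k+2"]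
          by (metis eq_neg_iff_add_eq_0)
        have R: "(of_nat (k+2) + 1) * (c + of_nat (k+2)) * g (Suc (Suc (Suc k)))
     = ((a + of_nat (k+2)) * (b + of_nat (k+2)) + \<i> * p * (c + 2 * of_nat (k+2))) * g (Suc (Suc k))
     + p * (p - \<i> * (a + b + 2 * of_nat (k+2) - 1)) * g (Suc k) - p^2 * g k"
          unfolding g_def by (rule G_rec[OF c])
        have "g (Suc (Suc (Suc k))) = (((a + of_nat (k+2)) * (b + of_nat (k+2)) + \<i> * p * (c + 2 * of_nat (k+2))) * g (Suc (Suc k))
     + p * (p - \<i> * (a + b + 2 * of_nat (k+2) - 1)) * g (Suc k) - p^2 * g k) / ((of_nat (k+2) + 1) * (c + of_nat (k+2)))"
          using R D1 D2 by (simp add: eq_divide_eq mult.commute)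
        moreover have "\<And>A B C D X Y Z::complex. A / D * X + B / D * Y - C / D * Z = (A * X + B * Y - C * Z) / D"
          by (simp add: diff_divide_distrib add_divide_distrib)
        ultimately show ?thesis unfolding n
          by (simp only: useq.simps Let_def I0 I1 I2 g_def[symmetric])
      qed
    qed
  qed
qed

lemma vseq_useq: "vseq a b c p n = useq a b c (-p) n"
  by (induction a b c p n rule: vseq.induct) (simp_all add: Let_def algebra_simps)

lemma ratio_lim:
  fixes a b c :: complex
  assumes c: "\<forall>n::nat. c \<noteq> - of_nat n"
  shows "(\<lambda>n. (a + of_nat n) * (b + of_nat n) / ((of_nat n + 1) * (of_nat n + c))) \<longlonglongrightarrow> 1"
proof -
  have "(\<lambda>n. (1 + a / of_nat n) * (1 + b / of_nat n) / ((1 + 1 / of_nat n) * (1 + c / of_nat n))) \<longlonglongrightarrow> ((1 + 0) * (1 + 0) / ((1 + 0) * (1 + 0)) :: complex)"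
    by (intro tendsto_intros) auto
  then have L: "(\<lambda>n. (1 + a / of_nat n) * (1 + b / of_nat n) / ((1 + 1 / of_nat n) * (1 + c / of_nat n))) \<longlonglongrightarrow> (1::complex)"
    by simp
  have ev: "\<forall>\<^sub>F n in sequentially. (1 + a / of_nat n) * (1 + b / of_nat n) / ((1 + 1 / of_nat n) * (1 + c / of_nat n))
     = (a + of_nat n) * (b + of_nat n) / ((of_nat n + 1) * (of_nat n + c))"
  proof (rule eventually_sequentiallyI[of 1])
    fix n :: nat assume "1 \<le> n"
    then have "(of_nat n :: complex) \<noteq> 0" by simp
    moreover have D1: "of_nat n + 1 \<noteq> (0::complex)"
      by (metis of_nat_Suc of_nat_neq_0 add.commute)
    moreover have D2: "of_nat n + c \<noteq> 0" using c[rule_format, of n]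
      by (metis add.commute eq_neg_iff_add_eq_0)
    ultimately have n0: "(of_nat n :: complex) * of_nat n \<noteq> 0" by simp
    from \<open>(of_nat n :: complex) \<noteq> 0\<close> have e1: "(1 + a / of_nat n) * (1 + b / of_nat n) = ((a + of_nat n) * (b + of_nat n)) / (of_nat n * of_nat n)"
      by (simp add: field_simps)
    from \<open>(of_nat n :: complex) \<noteq> 0\<close> have e2: "(1 + 1 / of_nat n) * (1 + c / of_nat n) = ((of_nat n + 1) * (of_nat n + c)) / (of_nat n * of_nat n)"
      by (simp add: field_simps)
    show "(1 + a / of_nat n) * (1 + b / of_nat n) / ((1 + 1 / of_nat n) * (1 + c / of_nat n))
     = (a + of_nat n) * (b + of_nat n) / ((of_nat n + 1) * (of_nat n + c))"
      unfolding e1 e2 using n0 by simp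
  qed
  show ?thesis using Lim_transform_eventually[OF L ev] .
qed

lemma hf_summable:
  fixes a b c z :: complex
  assumes c: "\<forall>n::nat. c \<noteq> - of_nat n" and z: "norm z < 1"
  shows "summable (\<lambda>n. norm (hf a b c n * z ^ n))"
proof -
  define q where "q n = (a + of_nat n) * (b + of_nat n) / ((of_nat n + 1) * (of_nat n + c))" for n
  define r where "r = (1 + norm z) / 2"
  have "(\<lambda>n. norm (q n)) \<longlonglongrightarrow> 1"
    using tendsto_norm[OF ratio_lim[OF c, of a b]] unfolding q_def by simp
  then have "(\<lambda>n. norm (q n) * norm z) \<longlonglongrightarrow> 1 * norm z"
    by (intro tendsto_intros)
  moreover have "norm z < r" using z by (simp add: r_def)
  ultimately have "\<forall>\<^sub>F n in sequentially. norm (q n) * norm z < r"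
    by (simp add: order_tendstoD(2))
  then obtain N where N: "\<And>n. n \<ge> N \<Longrightarrow> norm (q n) * norm z < r"
    by (auto simp: eventually_sequentially)
  show ?thesis
  proof (rule summable_ratio_test[of r N])
    show "r < 1" using z by (simp add: r_def)
  next
    fix n assume "N \<le> n"
    have D1: "of_nat n + 1 \<noteq> (0::complex)"
      by (metis of_nat_Suc of_nat_neq_0 add.commute)
    have D2: "of_nat n + c \<noteq> 0" using c[rule_format, of n]
      by (metis add.commute eq_neg_iff_add_eq_0)
    have D: "(of_nat n + 1) * (of_nat n + c) \<noteq> 0" using D1 D2 by simp
    have "hf a b c (Suc n) = ((of_nat n + 1) * (of_nat n + c) * hf a b c (Suc n)) / ((of_nat n + 1) * (of_nat n + c))"
      using D by simp
    also have "\<dots> = ((a + of_nat n) * (b + of_nat n) * hf a b c n) / ((of_nat n + 1) * (of_nat n + c))"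
      using hf_rec[OF c, of n a b] by simp
    also have "\<dots> = q n * hf a b c n" by (simp add: q_def)
    finally have "hf a b c (Suc n) = q n * hf a b c n" .
    then have "norm (norm (hf a b c (Suc n) * z ^ Suc n)) = (norm (q n) * norm z) * norm (norm (hf a b c n * z ^ n))"
      by (simp add: norm_mult norm_power)
    also have "\<dots> \<le> r * norm (norm (hf a b c n * z ^ n))"
      using N[OF `N \<le> n`] by (intro mult_right_mono) auto
    finally show "norm (norm (hf a b c (Suc n) * z ^ Suc n)) \<le> r * norm (norm (hf a b c n * z ^ n))" .
  qed
qed

lemma exp_part:
  fixes a b c p z :: complex
  assumes c: "\<forall>n::nat. c \<noteq> - of_nat n" and z: "norm z < 1"
  shows "(\<lambda>n. useq a b c p n * z ^ n) sums (exp (\<i> * p * z) * hypF a b c z)"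
proof -
  define x where "x = \<i> * p * z"
  have eq: "\<And>n. x ^ n /\<^sub>R fact n = x ^ n / fact n"
    by (auto simp: scaleR_conv_of_real divide_inverse)
  have s1: "summable (\<lambda>n. norm (x ^ n / fact n))"
    using summable_norm_exp[of x] by (simp only: eq)
  have e1: "(\<Sum>n. x ^ n / fact n) = exp x"
    using exp_converges[of x] by (simp only: eq) (simp add: sums_iff)
  have e2: "(\<Sum>n. hf a b c n * z ^ n) = hypF a b c z"
    by (simp add: hypF_def hf_def)
  have P: "(\<lambda>k. \<Sum>i\<le>k. x ^ i / fact i * (hf a b c (k - i) * z ^ (k - i))) sums (exp x * hypF a b c z)"
    using Cauchy_product_sums[OF s1 hf_summable[OF c z, of a b]] unfolding e1 e2 .
  have "(\<Sum>i\<le>k. x ^ i / fact i * (hf a b c (k - i) * z ^ (k - i))) = useq a b c p k * z ^ k" for k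
  proof -
    have "(\<Sum>i\<le>k. x ^ i / fact i * (hf a b c (k - i) * z ^ (k - i)))
        = (\<Sum>i\<le>k. (\<i> * p) ^ i / fact i * hf a b c (k - i) * z ^ k)"
    proof (rule sum.cong[OF refl])
      fix i assume "i \<in> {..k}"
      then have "z ^ k = z ^ i * z ^ (k - i)" by (simp add: power_add[symmetric])
      then show "x ^ i / fact i * (hf a b c (k - i) * z ^ (k - i)) = (\<i> * p) ^ i / fact i * hf a b c (k - i) * z ^ k"
        by (simp add: x_def power_mult_distrib)
    qed
    also have "\<dots> = fps_nth (GG a b c p) k * z ^ k"
      by (simp add: GG_def fps_mult_nth atLeast0AtMost sum_distrib_right)
    finally show ?thesis using useq_GG[OF c] by simp
  qed
  then show ?thesis using P by (simp add: x_def)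
qed

theorem theorem3p5:
  fixes a b c p z :: complex
  assumes "\<forall>n::nat. c \<noteq> - of_nat n"
    and "norm z < 1"
  shows "(\<lambda>n. (useq a b c p n + vseq a b c p n) / 2 * z ^ n) sums (cos (p * z) * hypF a b c z)"
proof -
  have s: "(\<lambda>n. (useq a b c p n * z ^ n + useq a b c (-p) n * z ^ n) / 2) sums
      ((exp (\<i> * p * z) * hypF a b c z + exp (\<i> * (-p) * z) * hypF a b c z) / 2)"
    by (intro sums_divide sums_add exp_part assms)
  have "cos (p * z) = (exp (\<i> * p * z) + exp (\<i> * (-p) * z)) / 2"
    by (simp add: cos_exp_eq mult.assoc)
  then show ?thesis using s by (simp add: vseq_useq algebra_simps add_divide_distrib)
qed
end
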